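(* For every non-constant Boolean function $f:\{0,1\}^n\to\{0,1\}$ and every $0<\epsilon<1$, $M_\epsilon(f)\ge\frac12\deg_\pm(f)$.
   Context: $\mathsf N_\epsilon(f)$ is the minimum degree of a real polynomial $p$ with $|p(x)|\le\epsilon$ whenever $f(x)=0$ and $|p(x)|\ge1$ whenever $f(x)=1$; $\overline f=1-f$; $M_\epsilon(f)=\max\{\mathsf N_\epsilon(f),\mathsf N_\epsilon(\overline f)\}$. The sign degree $\deg_\pm(f)$ is the minimum degree of a real polynomial $p$ such that for all $x\in\{0,1\}^n$, $p(x)<0$ iff $f(x)=1$. *)

theory Defs
  imports Main "HOL.Complex_Main"
begin

text \<open>Points of the Boolean cube {0,1}^n: maps nat => bool that are False (=0) outside {..<n}.\<close>
definition cube :: "nat \<Rightarrow> (nat \<Rightarrow> bool) set" where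
  "cube n = {x. \<forall>i\<ge>n. \<not> x i}"

text \<open>p (restricted to the cube) is a real polynomial of degree at most d in x_0..x_{n-1}.
  On {0,1}^n every real polynomial of degree <= d coincides with a multilinear one of degree <= d.\<close>
definition poly_deg_le :: "nat \<Rightarrow> nat \<Rightarrow> ((nat \<Rightarrow> bool) \<Rightarrow> real) \<Rightarrow> bool" where
  "poly_deg_le n d p \<longleftrightarrow>
     (\<exists>c :: nat set \<Rightarrow> real. \<forall>x\<in>cube n.
        p x = (\<Sum>S\<in>{S. S \<subseteq> {..<n} \<and> card S \<le> d}. c S * (\<Prod>i\<in>S. (if x i then 1 else 0))))"

text \<open>N_eps(f); f x = True means f(x)=1.\<close>
definition N_eps :: "nat \<Rightarrow> real \<Rightarrow> ((nat \<Rightarrow> bool) \<Rightarrow> bool) \<Rightarrow> nat" where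
  "N_eps n \<epsilon> f = (LEAST d. \<exists>p. poly_deg_le n d p \<and>
      (\<forall>x\<in>cube n. \<not> f x \<longrightarrow> \<bar>p x\<bar> \<le> \<epsilon>) \<and>
      (\<forall>x\<in>cube n. f x \<longrightarrow> \<bar>p x\<bar> \<ge> 1))"

definition M_eps :: "nat \<Rightarrow> real \<Rightarrow> ((nat \<Rightarrow> bool) \<Rightarrow> bool) \<Rightarrow> nat" where
  "M_eps n \<epsilon> f = max (N_eps n \<epsilon> f) (N_eps n \<epsilon> (\<lambda>x. \<not> f x))"

definition sign_deg :: "nat \<Rightarrow> ((nat \<Rightarrow> bool) \<Rightarrow> bool) \<Rightarrow> nat" where
  "sign_deg n f = (LEAST d. \<exists>p. poly_deg_le n d p \<and> (\<forall>x\<in>cube n. p x < 0 \<longleftrightarrow> f x))"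

end

theory Submission
  imports Defs
begin

definition mon :: "nat set \<Rightarrow> (nat \<Rightarrow> bool) \<Rightarrow> real" where
  "mon S x = (\<Prod>i\<in>S. (if x i then 1 else 0))"

lemma mon_eq: "finite S \<Longrightarrow> mon S x = (if (\<forall>i\<in>S. x i) then 1 else 0)"
  unfolding mon_def by (auto intro: prod.neutral)

lemma mon_union: "finite S \<Longrightarrow> finite T \<Longrightarrow> mon (S \<union> T) x = mon S x * mon T x"
  by (auto simp: mon_eq)

lemma pdl_alt: "poly_deg_le n d p \<longleftrightarrow>
   (\<exists>c. \<forall>x\<in>cube n. p x = (\<Sum>S\<in>{S. S \<subseteq> {..<n} \<and> card S \<le> d}. c S * mon S x))"
  unfolding poly_deg_le_def mon_def by simp

lemma finC: "finite {S. S \<subseteq> {..<(n::nat)} \<and> card S \<le> d}"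
  by (rule finite_subset[of _ "Pow {..<n}"]) auto

lemma gen_to_pdl:
  assumes K: "finite K" and M: "\<And>k. k \<in> K \<Longrightarrow> finite (M k) \<and> card (M k) \<le> d"
    and P: "\<And>x. x \<in> cube n \<Longrightarrow> p x = (\<Sum>k\<in>K. c k * mon (M k) x)"
  shows "poly_deg_le n d p"
proof -
  define C where "C = {S. S \<subseteq> {..<n} \<and> card S \<le> d}"
  define K' where "K' = {k\<in>K. M k \<subseteq> {..<n}}"
  define c' where "c' U = (\<Sum>k\<in>{k\<in>K'. M k = U}. c k)" for U
  have fK': "finite K'" using K unfolding K'_def by auto
  show ?thesis unfolding pdl_alt C_def[symmetric]
  proof (intro exI[of _ c'] ballI)
    fix x assume x: "x \<in> cube n"
    have "p x = (\<Sum>k\<in>K. c k * mon (M k) x)" using P x by simp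
    also have "\<dots> = (\<Sum>k\<in>K'. c k * mon (M k) x)"
    proof (rule sum.mono_neutral_right[OF K])
      show "K' \<subseteq> K" unfolding K'_def by auto
      show "\<forall>i\<in>K - K'. c i * mon (M i) x = 0"
      proof
        fix k assume k: "k \<in> K - K'"
        then obtain i where "i \<in> M k" "i \<ge> n" unfolding K'_def by (auto simp: subset_iff not_less)
        moreover have "\<not> x i" using x \<open>i \<ge> n\<close> unfolding cube_def by auto
        ultimately show "c k * mon (M k) x = 0" using M[of k] k by (auto simp: mon_eq)
      qed
    qed
    also have "\<dots> = (\<Sum>U\<in>C. \<Sum>k\<in>{k\<in>K'. M k = U}. c k * mon (M k) x)"
      by (rule sum.group[symmetric, OF fK' finC[of n d, folded C_def]])
         (use M in \<open>auto simp: C_def K'_def\<close>)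
    also have "\<dots> = (\<Sum>U\<in>C. c' U * mon U x)"
      unfolding c'_def sum_distrib_right by (rule sum.cong) auto
    finally show "p x = (\<Sum>U\<in>C. c' U * mon U x)" .
  qed
qed

lemma pdl_gen:
  assumes "poly_deg_le n d p"
  obtains c where "\<And>x. x \<in> cube n \<Longrightarrow> p x = (\<Sum>S\<in>{S. S \<subseteq> {..<n} \<and> card S \<le> d}. c S * mon S x)"
  using assms that unfolding pdl_alt by blast

lemma pdl_mono: "poly_deg_le n d p \<Longrightarrow> d \<le> e \<Longrightarrow> poly_deg_le n e p"
  apply (erule pdl_gen)
  apply (rule gen_to_pdl[where K="{S. S \<subseteq> {..<n} \<and> card S \<le> d}" and M=id])
    apply (auto simp: finC intro: finite_subset)
  done

lemma pdl_mult:
  assumes "poly_deg_le n d p" "poly_deg_le n e q"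
  shows "poly_deg_le n (d + e) (\<lambda>x. p x * q x)"
proof -
  obtain c1 where c1: "\<And>x. x \<in> cube n \<Longrightarrow> p x = (\<Sum>S\<in>{S. S \<subseteq> {..<n} \<and> card S \<le> d}. c1 S * mon S x)"
    using pdl_gen[OF assms(1)] by blast
  obtain c2 where c2: "\<And>x. x \<in> cube n \<Longrightarrow> q x = (\<Sum>S\<in>{S. S \<subseteq> {..<n} \<and> card S \<le> e}. c2 S * mon S x)"
    using pdl_gen[OF assms(2)] by blast
  let ?A = "{S. S \<subseteq> {..<n} \<and> card S \<le> d}"
  let ?B = "{S. S \<subseteq> {..<n} \<and> card S \<le> e}"
  show ?thesis
  proof (rule gen_to_pdl[where K="?A \<times> ?B" and M="\<lambda>(S,T). S \<union> T" and c="\<lambda>(S,T). c1 S * c2 T"])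
    show "finite (?A \<times> ?B)" using finC by blast
    fix k assume "k \<in> ?A \<times> ?B"
    then show "finite (case k of (S, T) \<Rightarrow> S \<union> T) \<and> card (case k of (S, T) \<Rightarrow> S \<union> T) \<le> d + e"
      by (auto intro: finite_subset card_Un_le[THEN order_trans])
  next
    fix x assume x: "x \<in> cube n"
    have "p x * q x = (\<Sum>S\<in>?A. \<Sum>T\<in>?B. (c1 S * mon S x) * (c2 T * mon T x))"
      by (simp add: c1[OF x] c2[OF x] sum_product)
    also have "\<dots> = (\<Sum>(S,T)\<in>?A \<times> ?B. (c1 S * mon S x) * (c2 T * mon T x))"
      by (rule sum.cartesian_product)
    also have "\<dots> = (\<Sum>k\<in>?A \<times> ?B. (case k of (S, T) \<Rightarrow> c1 S * c2 T) * mon (case k of (S, T) \<Rightarrow> S \<union> T) x)"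
    proof (rule sum.cong)
      fix k assume "k \<in> ?A \<times> ?B"
      then obtain S T where k: "k = (S,T)" "S \<subseteq> {..<n}" "T \<subseteq> {..<n}" by auto
      then have "finite S" "finite T" by (auto intro: finite_subset)
      then show "(case k of (S,T) \<Rightarrow> (c1 S * mon S x) * (c2 T * mon T x)) = (case k of (S, T) \<Rightarrow> c1 S * c2 T) * mon (case k of (S, T) \<Rightarrow> S \<union> T) x"
        using k by (simp add: mon_union)
    qed simp
    finally show "p x * q x = (\<Sum>k\<in>?A \<times> ?B. (case k of (S, T) \<Rightarrow> c1 S * c2 T) * mon (case k of (S, T) \<Rightarrow> S \<union> T) x)" .
  qed
qed

lemma pdl_add:
  assumes "poly_deg_le n d p" "poly_deg_le n d q"
  shows "poly_deg_le n d (\<lambda>x. p x + q x)"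
proof -
  obtain c1 where c1: "\<And>x. x \<in> cube n \<Longrightarrow> p x = (\<Sum>S\<in>{S. S \<subseteq> {..<n} \<and> card S \<le> d}. c1 S * mon S x)"
    using pdl_gen[OF assms(1)] by blast
  obtain c2 where c2: "\<And>x. x \<in> cube n \<Longrightarrow> q x = (\<Sum>S\<in>{S. S \<subseteq> {..<n} \<and> card S \<le> d}. c2 S * mon S x)"
    using pdl_gen[OF assms(2)] by blast
  show ?thesis unfolding pdl_alt
    by (rule exI[of _ "\<lambda>S. c1 S + c2 S"]) (simp add: c1 c2 distrib_right sum.distrib)
qed

lemma pdl_const: "poly_deg_le n d (\<lambda>x. a)"
  by (rule gen_to_pdl[where K="{()}" and M="\<lambda>_. {}" and c="\<lambda>_. a"]) (auto simp: mon_def)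

lemma pdl_var: "i < n \<Longrightarrow> poly_deg_le n 1 (\<lambda>x. if x i then 1 else 0)"
  by (rule gen_to_pdl[where K="{()}" and M="\<lambda>_. {i}" and c="\<lambda>_. 1"]) (auto simp: mon_def)

lemma pdl_scale: "poly_deg_le n d p \<Longrightarrow> poly_deg_le n d (\<lambda>x. a * p x)"
  using pdl_mult[OF pdl_const[of n 0 a]] by simp

lemma pdl_sum: "finite A \<Longrightarrow> (\<And>a. a \<in> A \<Longrightarrow> poly_deg_le n d (g a)) \<Longrightarrow>
   poly_deg_le n d (\<lambda>x. \<Sum>a\<in>A. g a x)"
proof (induction A rule: finite_induct)
  case empty then show ?case using pdl_const[of n d 0] by simp
next
  case (insert a A) then show ?case using pdl_add[of n d "g a" "\<lambda>x. \<Sum>a\<in>A. g a x"] by simp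
qed

lemma pdl_prod: "finite I \<Longrightarrow> (\<And>i. i \<in> I \<Longrightarrow> poly_deg_le n 1 (g i)) \<Longrightarrow>
   poly_deg_le n (card I) (\<lambda>x. \<Prod>i\<in>I. g i x)"
proof (induction I rule: finite_induct)
  case empty then show ?case using pdl_const[of n 0 1] by simp
next
  case (insert a A)
  then show ?case using pdl_mult[of n 1 "g a" "card A" "\<lambda>x. \<Prod>i\<in>A. g i x"] by simp
qed

definition delta :: "nat \<Rightarrow> (nat \<Rightarrow> bool) \<Rightarrow> (nat \<Rightarrow> bool) \<Rightarrow> real" where
  "delta n a x = (\<Prod>i\<in>{..<n}. if a i then (if x i then 1 else 0) else 1 - (if x i then 1 else 0))"

lemma delta_pdl: "poly_deg_le n n (delta n a)"
proof -
  have "poly_deg_le n (card {..<n}) (\<lambda>x. \<Prod>i\<in>{..<n}. if a i then (if x i then 1 else 0) else 1 - (if x i then 1 else (0::real)))"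
  proof (rule pdl_prod)
    fix i assume i: "i \<in> {..<n}"
    show "poly_deg_le n 1 (\<lambda>x. if a i then (if x i then 1 else 0) else 1 - (if x i then 1 else (0::real)))"
    proof (cases "a i")
      case True then show ?thesis using pdl_var[of i n] i by simp
    next
      case False then show ?thesis
        using pdl_add[OF pdl_const[of n 1 1] pdl_scale[OF pdl_var[of i n], of "-1"]] i by simp
    qed
  qed simp
  then show ?thesis unfolding delta_def[abs_def] by simp
qed

lemma delta_val: "a \<in> cube n \<Longrightarrow> x \<in> cube n \<Longrightarrow> delta n a x = (if a = x then 1 else 0)"
proof (cases "a = x")
  case True then show ?thesis unfolding delta_def by (auto intro: prod.neutral)
next
  case False
  assume a: "a \<in> cube n" and x: "x \<in> cube n"
  from False obtain i where i: "a i \<noteq> x i" by auto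
  then have "i < n" using a x unfolding cube_def by (metis not_le mem_Collect_eq)
  then show ?thesis unfolding delta_def using False i
    by (intro trans[OF prod_zero]) (auto intro: bexI[of _ i])
qed

lemma cube_finite: "finite (cube n)"
proof (rule finite_subset)
  show "cube n \<subseteq> (\<lambda>S i. i \<in> S) ` Pow {..<n}"
  proof
    fix x assume x: "x \<in> cube n"
    have "x = (\<lambda>i. i \<in> {i. x i})" by auto
    moreover have "{i. x i} \<in> Pow {..<n}" using x unfolding cube_def by (auto simp: not_le[symmetric])
    ultimately show "x \<in> (\<lambda>S i. i \<in> S) ` Pow {..<n}" by blast
  qed
qed simp

lemma exists_N:
  assumes "0 < \<epsilon>"
  shows "\<exists>p. poly_deg_le n n p \<and>
      (\<forall>x\<in>cube n. \<not> f x \<longrightarrow> \<bar>p x\<bar> \<le> \<epsilon>) \<and> (\<forall>x\<in>cube n. f x \<longrightarrow> \<bar>p x\<bar> \<ge> 1)"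
proof -
  define A where "A = {a\<in>cube n. f a}"
  have fA: "finite A" unfolding A_def using cube_finite by auto
  define p where "p x = (\<Sum>a\<in>A. delta n a x)" for x
  have pd: "poly_deg_le n n p" unfolding p_def[abs_def] by (rule pdl_sum[OF fA delta_pdl])
  have val: "p x = (if f x then 1 else 0)" if x: "x \<in> cube n" for x
  proof -
    have "p x = (\<Sum>a\<in>A. if a = x then 1 else 0)"
      unfolding p_def by (rule sum.cong) (auto simp: A_def delta_val x)
    also have "\<dots> = (if f x then 1 else 0)" using fA x by (auto simp: A_def)
    finally show ?thesis .
  qed
  show ?thesis using pd val assms by (intro exI[of _ p]) auto
qed

theorem fact3p1:
  fixes n :: nat and f :: "(nat \<Rightarrow> bool) \<Rightarrow> bool" and \<epsilon> :: real
  assumes "\<exists>x\<in>cube n. \<exists>y\<in>cube n. f x \<noteq> f y"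
    and "0 < \<epsilon>" and "\<epsilon> < 1"
  shows "real (M_eps n \<epsilon> f) \<ge> real (sign_deg n f) / 2"
proof -
  define d where "d = N_eps n \<epsilon> f"
  have "\<exists>p. poly_deg_le n d p \<and>
      (\<forall>x\<in>cube n. \<not> f x \<longrightarrow> \<bar>p x\<bar> \<le> \<epsilon>) \<and> (\<forall>x\<in>cube n. f x \<longrightarrow> \<bar>p x\<bar> \<ge> 1)"
    unfolding d_def N_eps_def by (rule LeastI_ex) (rule exI, rule exists_N[OF assms(2)])
  then obtain p where pd: "poly_deg_le n d p"
    and p0: "\<And>x. x\<in>cube n \<Longrightarrow> \<not> f x \<Longrightarrow> \<bar>p x\<bar> \<le> \<epsilon>"
    and p1: "\<And>x. x\<in>cube n \<Longrightarrow> f x \<Longrightarrow> \<bar>p x\<bar> \<ge> 1" by blast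
  define q where "q x = \<epsilon> + (-1) * (p x * p x)" for x
  have qd: "poly_deg_le n (d + d) q"
    unfolding q_def[abs_def]
    by (rule pdl_add[OF pdl_const pdl_scale[OF pdl_mult[OF pd pd]]])
  have qs: "\<forall>x\<in>cube n. q x < 0 \<longleftrightarrow> f x"
  proof
    fix x assume x: "x \<in> cube n"
    show "q x < 0 \<longleftrightarrow> f x"
    proof (cases "f x")
      case True
      have "1 * 1 \<le> \<bar>p x\<bar> * \<bar>p x\<bar>" using p1[OF x True] by (intro mult_mono) auto
      then show ?thesis using True assms(3) by (simp add: q_def abs_mult_self)
    next
      case False
      have "\<bar>p x\<bar> * \<bar>p x\<bar> \<le> \<epsilon> * \<epsilon>" using p0[OF x False] by (intro mult_mono) auto
      moreover have "\<epsilon> * \<epsilon> < \<epsilon> * 1" using assms(2,3) by (intro mult_strict_left_mono) auto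
      ultimately show ?thesis using False by (simp add: q_def abs_mult_self)
    qed
  qed
  have "sign_deg n f \<le> d + d"
    unfolding sign_deg_def by (rule Least_le) (use qd qs in blast)
  moreover have "d \<le> M_eps n \<epsilon> f" unfolding M_eps_def d_def by simp
  ultimately show ?thesis by simp
qed

end
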